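(* On the $\kappa G^\#$-module $\Lambda_G$: (i) the dot product and the bracket are $\kappa G^\#$-bilinear; the dot product is symmetric and the bracket skew-symmetric; (ii) the bracket satisfies the Jacobi identity $[[\vec x,\vec y],\vec z]+[[\vec y,\vec z],\vec x]+[[\vec z,\vec x],\vec y]=0$; (iii) the map $(\vec x,\vec y,\vec z)\mapsto[\vec x,\vec y]\cdot\vec z$ is an alternating trilinear map; (iv) $[[\vec x,\vec y],\vec z]=(\vec x\cdot\vec z)\vec y-(\vec y\cdot\vec z)\vec x$ for all $\vec x,\vec y,\vec z\in\Lambda_G$.
   Context: Let $\kappa$ be a field of characteristic $0$ and $G$ a group. Let $*:\kappa G\to\kappa G$ be the $\kappa$-linear map with $g^*=g^{-1}$, $(\kappa G)^*$ its fixed points, and $A_G$ the quotient of $\kappa G$ by the two-sided ideal generated by all $ab-ba$, $a\in\kappa G$, $b\in(\kappa G)^*$; $*$ descends to $A_G$. Let $\kappa G^\#=\{x\in A_G:x^*=x\}$ (a commutative subring of the centre of $A_G$) and $\Lambda_G=\{x\in A_G:x^*=-x\}$, a $\kappa G^\#$-module. For $\vec x,\vec y\in\Lambda_G$ define $\vec x\cdot\vec y=-\tfrac12(\vec x\vec y+\vec y\vec x)\in\kappa G^\#$ and $[\vec x,\vec y]=\tfrac12(\vec x\vec y-\vec y\vec x)\in\Lambda_G$. *)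

theory Defs
  imports "HOL-Algebra.Group" "HOL-Library.Function_Algebras"
begin

text \<open>The group algebra kappa G, for a group G (HOL-Algebra) and a field 'k of
characteristic 0, is represented by finitely supported functions from the
carrier of G to 'k (vanishing outside the carrier). Addition, subtraction and
negation are pointwise (HOL-Library.Function_Algebras); multiplication is
convolution.\<close>

definition grp_alg :: "('g, 'm) monoid_scheme \<Rightarrow> ('g \<Rightarrow> 'k::field_char_0) set" where
  "grp_alg G = {f. finite {g. f g \<noteq> 0} \<and> (\<forall>g. g \<notin> carrier G \<longrightarrow> f g = 0)}"

definition conv :: "('g, 'm) monoid_scheme \<Rightarrow> ('g \<Rightarrow> 'k::field_char_0) \<Rightarrow> ('g \<Rightarrow> 'k) \<Rightarrow> ('g \<Rightarrow> 'k)" where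
  "conv G f h = (\<lambda>x. if x \<in> carrier G
      then (\<Sum>y\<in>{y \<in> carrier G. f y \<noteq> 0}. f y * h (inv\<^bsub>G\<^esub> y \<otimes>\<^bsub>G\<^esub> x)) else 0)"

definition smul :: "'k::field_char_0 \<Rightarrow> ('g \<Rightarrow> 'k) \<Rightarrow> ('g \<Rightarrow> 'k)" where
  "smul c f = (\<lambda>x. c * f x)"

text \<open>The involution *: the linear map with g* = g^-1, i.e. (f*)(x) = f(x^-1).\<close>
definition gstar :: "('g, 'm) monoid_scheme \<Rightarrow> ('g \<Rightarrow> 'k::field_char_0) \<Rightarrow> ('g \<Rightarrow> 'k)" where
  "gstar G f = (\<lambda>x. if x \<in> carrier G then f (inv\<^bsub>G\<^esub> x) else 0)"

definition sym_alg :: "('g, 'm) monoid_scheme \<Rightarrow> ('g \<Rightarrow> 'k::field_char_0) set" where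
  "sym_alg G = {b \<in> grp_alg G. gstar G b = b}"

inductive_set comm_ideal :: "('g, 'm) monoid_scheme \<Rightarrow> ('g \<Rightarrow> 'k::field_char_0) set"
  for G :: "('g, 'm) monoid_scheme" where
  gen: "a \<in> grp_alg G \<Longrightarrow> b \<in> sym_alg G \<Longrightarrow> conv G a b - conv G b a \<in> comm_ideal G"
| zero: "0 \<in> comm_ideal G"
| add: "x \<in> comm_ideal G \<Longrightarrow> y \<in> comm_ideal G \<Longrightarrow> x + y \<in> comm_ideal G"
| lmult: "r \<in> grp_alg G \<Longrightarrow> x \<in> comm_ideal G \<Longrightarrow> conv G r x \<in> comm_ideal G"
| rmult: "r \<in> grp_alg G \<Longrightarrow> x \<in> comm_ideal G \<Longrightarrow> conv G x r \<in> comm_ideal G"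

text \<open>Equality in A_G = kappa G / ideal, expressed on representatives.\<close>
definition AG_eq :: "('g, 'm) monoid_scheme \<Rightarrow> ('g \<Rightarrow> 'k::field_char_0) \<Rightarrow> ('g \<Rightarrow> 'k) \<Rightarrow> bool" where
  "AG_eq G x y \<longleftrightarrow> x - y \<in> comm_ideal G"

text \<open>Representatives of elements of kappa G^# (x* = x in A_G).\<close>
definition sharp_rep :: "('g, 'm) monoid_scheme \<Rightarrow> ('g \<Rightarrow> 'k::field_char_0) set" where
  "sharp_rep G = {s \<in> grp_alg G. AG_eq G (gstar G s) s}"

text \<open>Representatives of elements of Lambda_G (x* = -x in A_G).\<close>
definition Lam_rep :: "('g, 'm) monoid_scheme \<Rightarrow> ('g \<Rightarrow> 'k::field_char_0) set" where
  "Lam_rep G = {x \<in> grp_alg G. AG_eq G (gstar G x) (- x)}"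

definition gdot :: "('g, 'm) monoid_scheme \<Rightarrow> ('g \<Rightarrow> 'k::field_char_0) \<Rightarrow> ('g \<Rightarrow> 'k) \<Rightarrow> ('g \<Rightarrow> 'k)" where
  "gdot G x y = smul (- 1 / 2) (conv G x y + conv G y x)"

definition gbr :: "('g, 'm) monoid_scheme \<Rightarrow> ('g \<Rightarrow> 'k::field_char_0) \<Rightarrow> ('g \<Rightarrow> 'k) \<Rightarrow> ('g \<Rightarrow> 'k)" where
  "gbr G x y = smul (1 / 2) (conv G x y - conv G y x)"

definition gtri :: "('g, 'm) monoid_scheme \<Rightarrow> ('g \<Rightarrow> 'k::field_char_0) \<Rightarrow> ('g \<Rightarrow> 'k) \<Rightarrow> ('g \<Rightarrow> 'k) \<Rightarrow> ('g \<Rightarrow> 'k)" where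
  "gtri G x y z = gdot G (gbr G x y) z"

end

theory Submission
  imports Defs
begin

locale galg =
  fixes R :: "'a::comm_ring_1 set" and m :: "'a \<Rightarrow> 'a \<Rightarrow> 'a" and st :: "'a \<Rightarrow> 'a"
    and I :: "'a set" and h :: 'a
  assumes R0: "0 \<in> R" and Radd: "a \<in> R \<Longrightarrow> b \<in> R \<Longrightarrow> a + b \<in> R"
    and Rneg: "a \<in> R \<Longrightarrow> - a \<in> R" and Rm: "a \<in> R \<Longrightarrow> b \<in> R \<Longrightarrow> m a b \<in> R"
    and Rst: "a \<in> R \<Longrightarrow> st a \<in> R" and Rh: "a \<in> R \<Longrightarrow> h * a \<in> R"
    and madd1: "a \<in> R \<Longrightarrow> b \<in> R \<Longrightarrow> c \<in> R \<Longrightarrow> m (a + b) c = m a c + m b c"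
    and madd2: "a \<in> R \<Longrightarrow> b \<in> R \<Longrightarrow> c \<in> R \<Longrightarrow> m a (b + c) = m a b + m a c"
    and mh1: "a \<in> R \<Longrightarrow> b \<in> R \<Longrightarrow> m (h * a) b = h * m a b"
    and mh2: "a \<in> R \<Longrightarrow> b \<in> R \<Longrightarrow> m a (h * b) = h * m a b"
    and massoc: "a \<in> R \<Longrightarrow> b \<in> R \<Longrightarrow> c \<in> R \<Longrightarrow> m (m a b) c = m a (m b c)"
    and stadd: "a \<in> R \<Longrightarrow> b \<in> R \<Longrightarrow> st (a + b) = st a + st b"
    and sth: "a \<in> R \<Longrightarrow> st (h * a) = h * st a"
    and stst: "a \<in> R \<Longrightarrow> st (st a) = a"
    and stm: "a \<in> R \<Longrightarrow> b \<in> R \<Longrightarrow> st (m a b) = m (st b) (st a)"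
    and IR: "x \<in> I \<Longrightarrow> x \<in> R" and I0: "0 \<in> I"
    and Iadd: "x \<in> I \<Longrightarrow> y \<in> I \<Longrightarrow> x + y \<in> I"
    and Ineg: "x \<in> I \<Longrightarrow> - x \<in> I" and Ih: "x \<in> I \<Longrightarrow> h * x \<in> I"
    and Il: "r \<in> R \<Longrightarrow> x \<in> I \<Longrightarrow> m r x \<in> I"
    and Ir: "r \<in> R \<Longrightarrow> x \<in> I \<Longrightarrow> m x r \<in> I"
    and Igen: "a \<in> R \<Longrightarrow> b \<in> R \<Longrightarrow> st b = b \<Longrightarrow> m a b - m b a \<in> I"
    and hh: "h + h = 1"
begin

lemma Rdiff[simp]: "a \<in> R \<Longrightarrow> b \<in> R \<Longrightarrow> a - b \<in> R"
  using Radd Rneg by (metis diff_conv_add_uminus)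

lemma Idiff: "x \<in> I \<Longrightarrow> y \<in> I \<Longrightarrow> x - y \<in> I"
  using Iadd Ineg by (metis diff_conv_add_uminus)

lemma m0l[simp]: "b \<in> R \<Longrightarrow> m 0 b = 0"
  using madd1[of 0 0 b] R0 by simp
lemma m0r[simp]: "b \<in> R \<Longrightarrow> m b 0 = 0"
  using madd2[of b 0 0] R0 by simp
lemma mneg1[simp]: "a \<in> R \<Longrightarrow> b \<in> R \<Longrightarrow> m (- a) b = - m a b"
  using madd1[of a "-a" b] Rneg by (simp add: eq_neg_iff_add_eq_0 add.commute)
lemma mneg2[simp]: "a \<in> R \<Longrightarrow> b \<in> R \<Longrightarrow> m b (- a) = - m b a"
  using madd2[of b a "-a"] Rneg by (simp add: eq_neg_iff_add_eq_0 add.commute)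
lemma mdiff1[simp]: "a \<in> R \<Longrightarrow> b \<in> R \<Longrightarrow> c \<in> R \<Longrightarrow> m (a - b) c = m a c - m b c"
  using madd1[of a "-b" c] Rneg by simp
lemma mdiff2[simp]: "a \<in> R \<Longrightarrow> b \<in> R \<Longrightarrow> c \<in> R \<Longrightarrow> m c (a - b) = m c a - m c b"
  using madd2[of c a "-b"] Rneg by simp
lemma st0: "st 0 = 0"
  using stadd[of 0 0] R0 by simp
lemma stneg[simp]: "a \<in> R \<Longrightarrow> st (- a) = - st a"
  using stadd[of a "-a"] Rneg st0 by (simp add: eq_neg_iff_add_eq_0 add.commute)
lemma stdiff[simp]: "a \<in> R \<Longrightarrow> b \<in> R \<Longrightarrow> st (a - b) = st a - st b"
  using stadd[of a "-b"] Rneg by simp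

lemmas I0s[simp] = I0
lemmas Rcl[simp] = R0 Radd Rneg Rm Rst Rh
lemmas msimps[simp] = madd1 madd2 mh1 mh2 massoc stadd sth stst stm

definition "Lam = {x \<in> R. st x - (- x) \<in> I}"
definition "Sh = {s \<in> R. st s - s \<in> I}"
definition "dot x y = - (h * (m x y + m y x))"
definition "br x y = h * (m x y - m y x)"

lemma h2: "h * (h * a) + h * (h * a) = h * a"
proof -
  have "h * (h * a) + h * (h * a) = (h + h) * (h * a)" by (simp add: algebra_simps)
  then show ?thesis using hh by simp
qed

lemma h4: "h * (h * (4 * a)) = h * (2 * a)"
proof -
  have "h * (h * (4 * a)) = h * (h * (2 * a)) + h * (h * (2 * a))" by (simp add: algebra_simps)
  then show ?thesis using h2 by simp
qed

lemma h2': "h * (h * (2 * a)) = h * a"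
proof -
  have "h * (h * (2 * a)) = h * (h * a) + h * (h * a)" by (simp add: algebra_simps)
  then show ?thesis using h2 by simp
qed

lemma central:
  assumes s: "s \<in> R" "st s - s \<in> I" and a: "a \<in> R"
  shows "m s a - m a s \<in> I"
proof -
  define s0 where "s0 = h * (s + st s)"
  have s0R: "s0 \<in> R" using s by (simp add: s0_def)
  have "st s0 = s0" using s by (simp add: s0_def add.commute)
  then have g: "m a s0 - m s0 a \<in> I" using Igen a s0R by blast
  define d where "d = s - s0"
  have "d - (- (h * (st s - s))) = s - (h + h) * s"
    unfolding d_def s0_def by (simp add: algebra_simps)
  then have "d = - (h * (st s - s))" using hh by (simp add: eq_neg_iff_add_eq_0)
  then have dI: "d \<in> I" using s Ineg Ih by simp
  have dR: "d \<in> R" using dI IR by blast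
  have "m s a - m a s = - (m a s0 - m s0 a) + m d a - m a d"
    using s a s0R unfolding d_def by (simp add: algebra_simps)
  then show ?thesis using g dI dR a by (metis Iadd Idiff Ineg Il Ir)
qed

lemma LamD: "x \<in> Lam \<Longrightarrow> x \<in> R" "x \<in> Lam \<Longrightarrow> st x + x \<in> I"
  by (auto simp: Lam_def)

lemma trans3: "a - b \<in> I \<Longrightarrow> b - c \<in> I \<Longrightarrow> a - c \<in> I"
  using Iadd[of "a - b" "b - c"] by simp

lemma eqI: "a = b \<Longrightarrow> a - b \<in> I" using I0 by simp

lemma P: assumes "x \<in> Lam" "y \<in> Lam" shows "m (st y) (st x) - m y x \<in> I"
proof -
  have R: "x \<in> R" "y \<in> R" using assms LamD by auto
  have "m (st y) (st x) - m y x = m (st y + y) (st x) - m y (st x + x)"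
    using R by (simp add: algebra_simps)
  then show ?thesis using assms LamD R by (metis Idiff Il Ir Rst)
qed

lemma dot_S: assumes "x \<in> Lam" "y \<in> Lam" shows "dot x y \<in> Sh"
proof -
  have R: "x \<in> R" "y \<in> R" using assms LamD by auto
  have "st (dot x y) - dot x y = - (h * ((m (st y) (st x) - m y x) + (m (st x) (st y) - m x y)))"
    using R by (simp add: dot_def algebra_simps)
  then have "st (dot x y) - dot x y \<in> I" using P[OF assms] P[OF assms(2,1)] by (metis Iadd Ih Ineg)
  then show ?thesis using R by (simp add: Sh_def dot_def)
qed

lemma br_L: assumes "x \<in> Lam" "y \<in> Lam" shows "br x y \<in> Lam"
proof -
  have R: "x \<in> R" "y \<in> R" using assms LamD by auto
  have "st (br x y) - (- br x y) = h * ((m (st y) (st x) - m y x) - (m (st x) (st y) - m x y))"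
    using R by (simp add: br_def algebra_simps)
  then have "st (br x y) - (- br x y) \<in> I" using P[OF assms] P[OF assms(2,1)] by (metis Idiff Ih)
  then show ?thesis using R by (simp add: Lam_def br_def)
qed

lemma dotR[simp]: "x \<in> R \<Longrightarrow> y \<in> R \<Longrightarrow> dot x y \<in> R" by (simp add: dot_def)
lemma brR[simp]: "x \<in> R \<Longrightarrow> y \<in> R \<Longrightarrow> br x y \<in> R" by (simp add: br_def)

lemma ShD: "s \<in> Sh \<Longrightarrow> s \<in> R" "s \<in> Sh \<Longrightarrow> st s - s \<in> I" by (auto simp: Sh_def)

lemma central': "s \<in> Sh \<Longrightarrow> a \<in> R \<Longrightarrow> m a s - m s a \<in> I"
  using central[of s a] ShD Ineg by fastforce

lemma dot_lin1: assumes "s \<in> Sh" "x \<in> R" "y \<in> R" shows "dot (m s x) y - m s (dot x y) \<in> I"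
proof -
  have sR: "s \<in> R" using assms ShD by auto
  have "dot (m s x) y - m s (dot x y) = - (h * m (m y s - m s y) x)"
    using sR assms by (simp add: dot_def algebra_simps)
  then show ?thesis using central'[OF assms(1), of y] assms sR by (metis Ih Ineg Ir)
qed

lemma dot_lin2: assumes "s \<in> Sh" "x \<in> R" "y \<in> R" shows "dot x (m s y) - m s (dot x y) \<in> I"
proof -
  have sR: "s \<in> R" using assms ShD by auto
  have "dot x (m s y) - m s (dot x y) = - (h * m (m x s - m s x) y)"
    using sR assms by (simp add: dot_def algebra_simps)
  then show ?thesis using central'[OF assms(1), of x] assms sR by (metis Ih Ineg Ir)
qed

lemma br_lin1: assumes "s \<in> Sh" "x \<in> R" "y \<in> R" shows "br (m s x) y - m s (br x y) \<in> I"
proof -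
  have sR: "s \<in> R" using assms ShD by auto
  have "br (m s x) y - m s (br x y) = - (h * m (m y s - m s y) x)"
    using sR assms by (simp add: br_def algebra_simps)
  then show ?thesis using central'[OF assms(1), of y] assms sR by (metis Ih Ineg Ir)
qed

lemma br_lin2: assumes "s \<in> Sh" "x \<in> R" "y \<in> R" shows "br x (m s y) - m s (br x y) \<in> I"
proof -
  have sR: "s \<in> R" using assms ShD by auto
  have "br x (m s y) - m s (br x y) = h * m (m x s - m s x) y"
    using sR assms by (simp add: br_def algebra_simps)
  then show ?thesis using central'[OF assms(1), of x] assms sR by (metis Ih Ir)
qed

lemma dot_cong1: assumes "a \<in> R" "b \<in> R" "z \<in> R" "a - b \<in> I" shows "dot a z - dot b z \<in> I"
proof -
  have "dot a z - dot b z = - (h * (m (a - b) z + m z (a - b)))"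
    using assms by (simp add: dot_def algebra_simps)
  then show ?thesis using assms by (metis Iadd Ih Ineg Il Ir)
qed

definition "T x y z = dot (br x y) z"

lemma sq_central: assumes "x \<in> Lam" "a \<in> R" shows "m (m x x) a - m a (m x x) \<in> I"
proof -
  have xR: "x \<in> R" using assms LamD by auto
  define c where "c = m x (st x)"
  have cR: "c \<in> R" using xR by (simp add: c_def)
  have "st c - c \<in> I" using xR by (simp add: c_def I0)
  then have cc: "m c a - m a c \<in> I" using central cR assms by blast
  define e where "e = m x (st x + x)"
  have eI: "e \<in> I" unfolding e_def by (rule Il[OF xR LamD(2)[OF assms(1)]])
  have eR: "e \<in> R" using eI IR by blast
  have "m (m x x) a - m a (m x x) = - (m c a - m a c) + m e a - m a e"
    using xR assms by (simp add: c_def e_def algebra_simps)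
  then show ?thesis using cc eI eR assms by (metis Iadd Idiff Ineg Il Ir)
qed

lemma c_central: assumes "x \<in> Lam" "z \<in> Lam" "a \<in> R"
  shows "m (m x z + m z x) a - m a (m x z + m z x) \<in> I"
proof -
  have R: "x \<in> R" "z \<in> R" using assms LamD by auto
  have "st (m x z + m z x) - (m x z + m z x) = (m (st z) (st x) - m z x) + (m (st x) (st z) - m x z)"
    using R by (simp add: algebra_simps)
  then have ss: "st (m x z + m z x) - (m x z + m z x) \<in> I" using P[OF assms(1,2)] P[OF assms(2,1)] by (metis Iadd)
  show ?thesis using central[OF _ ss assms(3)] R by simp
qed

theorem main:
  shows
    "((\<forall>x\<in>Lam. \<forall>y\<in>Lam. dot x y \<in> Sh \<and> br x y \<in> Lam)
     \<and> (\<forall>x\<in>Lam. \<forall>x'\<in>Lam. \<forall>y\<in>Lam.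
          dot (x + x') y - (dot x y + dot x' y) \<in> I \<and> dot y (x + x') - (dot y x + dot y x') \<in> I
        \<and> br (x + x') y - (br x y + br x' y) \<in> I \<and> br y (x + x') - (br y x + br y x') \<in> I)
     \<and> (\<forall>s\<in>Sh. \<forall>x\<in>Lam. \<forall>y\<in>Lam.
          dot (m s x) y - (m s (dot x y)) \<in> I \<and> dot x (m s y) - (m s (dot x y)) \<in> I
        \<and> br (m s x) y - (m s (br x y)) \<in> I \<and> br x (m s y) - (m s (br x y)) \<in> I)
     \<and> (\<forall>x\<in>Lam. \<forall>y\<in>Lam. dot x y - (dot y x) \<in> I \<and> br x y - (- br y x) \<in> I))
    \<and> (\<forall>x\<in>Lam. \<forall>y\<in>Lam. \<forall>z\<in>Lam. (br (br x y) z + br (br y z) x + br (br z x) y) - 0 \<in> I)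
    \<and> ((\<forall>x\<in>Lam. \<forall>x'\<in>Lam. \<forall>y\<in>Lam. \<forall>z\<in>Lam.
          (T (x + x') y z) - (T x y z + T x' y z) \<in> I
        \<and> (T y (x + x') z) - (T y x z + T y x' z) \<in> I
        \<and> (T y z (x + x')) - (T y z x + T y z x') \<in> I)
     \<and> (\<forall>s\<in>Sh. \<forall>x\<in>Lam. \<forall>y\<in>Lam. \<forall>z\<in>Lam.
          (T (m s x) y z) - (m s (T x y z)) \<in> I
        \<and> (T x (m s y) z) - (m s (T x y z)) \<in> I
        \<and> (T x y (m s z)) - (m s (T x y z)) \<in> I)
     \<and> (\<forall>x\<in>Lam. \<forall>y\<in>Lam. (T x x y) - 0 \<in> I \<and> (T x y x) - 0 \<in> I \<and> (T y x x) - 0 \<in> I))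
    \<and> (\<forall>x\<in>Lam. \<forall>y\<in>Lam. \<forall>z\<in>Lam. (br (br x y) z) - (m (dot x z) y - m (dot y z) x) \<in> I)"
proof (intro conjI ballI)
  fix x y assume a: "x \<in> Lam" "y \<in> Lam"
  show "dot x y \<in> Sh" "br x y \<in> Lam" using dot_S[OF a] br_L[OF a] by auto
  show "dot x y - dot y x \<in> I" "br x y - (- br y x) \<in> I" using a LamD
    by (auto intro!: eqI simp: dot_def br_def algebra_simps I0)
next
  fix x x' y assume a: "x \<in> Lam" "x' \<in> Lam" "y \<in> Lam"
  then have R: "x \<in> R" "x' \<in> R" "y \<in> R" using LamD by auto
  show "dot (x + x') y - (dot x y + dot x' y) \<in> I" "dot y (x + x') - (dot y x + dot y x') \<in> I"
    "br (x + x') y - (br x y + br x' y) \<in> I" "br y (x + x') - (br y x + br y x') \<in> I"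
    using R by (auto intro!: eqI simp: dot_def br_def algebra_simps)
next
  fix s x y assume a: "s \<in> Sh" "x \<in> Lam" "y \<in> Lam"
  then have R: "x \<in> R" "y \<in> R" using LamD by auto
  show "dot (m s x) y - (m s (dot x y)) \<in> I" "dot x (m s y) - (m s (dot x y)) \<in> I"
    "br (m s x) y - (m s (br x y)) \<in> I" "br x (m s y) - (m s (br x y)) \<in> I"
    using dot_lin1 dot_lin2 br_lin1 br_lin2 a R by auto
next
  fix x y z assume a: "x \<in> Lam" "y \<in> Lam" "z \<in> Lam"
  then have R: "x \<in> R" "y \<in> R" "z \<in> R" using LamD by auto
  show "(br (br x y) z + br (br y z) x + br (br z x) y) - 0 \<in> I"
    using R by (auto intro!: eqI simp: br_def algebra_simps)
  define cxz where "cxz = m x z + m z x"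
  define cyz where "cyz = m y z + m z y"
  have c1: "m cxz y - m y cxz \<in> I" using c_central[OF a(1,3)] R by (simp add: cxz_def)
  have c2: "m cyz x - m x cyz \<in> I" using c_central[OF a(2,3)] R by (simp add: cyz_def)
  have "(br (br x y) z) - (m (dot x z) y - m (dot y z) x)
        = h * (h * (m cxz y - m y cxz)) - h * (h * (m cyz x - m x cyz))"
    using R by (simp add: cxz_def cyz_def br_def dot_def algebra_simps h4 h2')
  then show "(br (br x y) z) - (m (dot x z) y - m (dot y z) x) \<in> I"
    using c1 c2 by (metis Idiff Ih)
next
  fix x x' y z assume a: "x \<in> Lam" "x' \<in> Lam" "y \<in> Lam" "z \<in> Lam"
  then have R: "x \<in> R" "x' \<in> R" "y \<in> R" "z \<in> R" using LamD by auto
  show "(T (x + x') y z) - (T x y z + T x' y z) \<in> I"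
        "(T y (x + x') z) - (T y x z + T y x' z) \<in> I"
        "(T y z (x + x')) - (T y z x + T y z x') \<in> I"
    using R by (auto intro!: eqI simp: T_def dot_def br_def algebra_simps)
next
  fix s x y z assume a: "s \<in> Sh" "x \<in> Lam" "y \<in> Lam" "z \<in> Lam"
  then have R: "x \<in> R" "y \<in> R" "z \<in> R" "s \<in> R" using LamD ShD by auto
  show "(T (m s x) y z) - (m s (T x y z)) \<in> I"
    unfolding T_def
    by (rule trans3[OF dot_cong1[OF _ _ _ br_lin1[OF a(1) R(1,2)]] dot_lin1[OF a(1)]]) (use R in simp_all)
  show "(T x (m s y) z) - (m s (T x y z)) \<in> I"
    unfolding T_def
    by (rule trans3[OF dot_cong1[OF _ _ _ br_lin2[OF a(1) R(1,2)]] dot_lin1[OF a(1)]]) (use R in simp_all)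
  show "(T x y (m s z)) - (m s (T x y z)) \<in> I"
    unfolding T_def using dot_lin2[OF a(1)] R by simp
next
  fix x y assume a: "x \<in> Lam" "y \<in> Lam"
  then have R: "x \<in> R" "y \<in> R" using LamD by auto
  show "T x x y - 0 \<in> I" using R by (auto intro!: eqI simp: T_def dot_def br_def I0)
  have q: "m (m x x) y - m y (m x x) \<in> I" by (rule sq_central[OF a(1) R(2)])
  have "T x y x = - (h * (h * (m (m x x) y - m y (m x x))))"
    using R by (simp add: T_def dot_def br_def algebra_simps)
  then show "T x y x - 0 \<in> I" using q by (metis Ih Ineg diff_zero)
  have "T y x x = h * (h * (m (m x x) y - m y (m x x)))"
    using R by (simp add: T_def dot_def br_def algebra_simps)
  then show "T y x x - 0 \<in> I" using q by (metis Ih diff_zero)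
qed

end

definition spt :: "('g \<Rightarrow> 'k::zero) \<Rightarrow> 'g set" where "spt f = {y. f y \<noteq> 0}"

context group begin

lemma cancel1: "x \<in> carrier G \<Longrightarrow> y \<in> carrier G \<Longrightarrow> x \<otimes> (inv x \<otimes> y) = y"
  by (simp add: m_assoc[symmetric] r_inv)
lemma cancel2: "x \<in> carrier G \<Longrightarrow> y \<in> carrier G \<Longrightarrow> inv x \<otimes> (x \<otimes> y) = y"
  by (simp add: m_assoc[symmetric] l_inv)

lemma galgD:
  assumes "f \<in> grp_alg G"
  shows "finite (spt f)" "g \<notin> carrier G \<Longrightarrow> f g = 0" "spt f \<subseteq> carrier G"
  using assms by (auto simp: grp_alg_def spt_def)

lemma galgI: "finite (spt f) \<Longrightarrow> (\<And>g. g \<notin> carrier G \<Longrightarrow> f g = 0) \<Longrightarrow> f \<in> grp_alg G"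
  by (auto simp: grp_alg_def spt_def)

lemma conv_eq:
  assumes f: "f \<in> grp_alg G" and A: "finite A" "spt f \<subseteq> A"
  shows "conv G f k = (\<lambda>x. if x \<in> carrier G then \<Sum>y\<in>A. f y * k (inv y \<otimes> x) else 0)"
proof (rule ext)
  fix x
  have sub: "{y \<in> carrier G. f y \<noteq> 0} \<subseteq> A" using A by (auto simp: spt_def)
  have "(\<Sum>y\<in>{y \<in> carrier G. f y \<noteq> 0}. f y * k (inv y \<otimes> x)) = (\<Sum>y\<in>A. f y * k (inv y \<otimes> x))"
    by (rule sum.mono_neutral_left[OF A(1) sub]) (use galgD(2)[OF f] in auto)
  then show "conv G f k x = (if x \<in> carrier G then \<Sum>y\<in>A. f y * k (inv y \<otimes> x) else 0)"
    by (simp add: conv_def)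
qed

lemma alg0: "(0 :: 'a \<Rightarrow> 'k::field_char_0) \<in> grp_alg G"
  by (rule galgI) (auto simp: spt_def)

lemma alg_add: "f \<in> grp_alg G \<Longrightarrow> g \<in> grp_alg G \<Longrightarrow> f + g \<in> grp_alg G"
  apply (rule galgI)
   apply (rule finite_subset[of _ "spt f \<union> spt g"])
    apply (auto simp: spt_def dest: galgD)
  apply (auto simp: grp_alg_def)
  done

lemma alg_neg: "f \<in> grp_alg G \<Longrightarrow> - f \<in> grp_alg G"
  apply (rule galgI)
   apply (rule finite_subset[of _ "spt f"])
    apply (auto simp: spt_def dest: galgD)
  done

lemma alg_cmul: "f \<in> grp_alg G \<Longrightarrow> (\<lambda>_. c) * f \<in> grp_alg G"
  apply (rule galgI)
   apply (rule finite_subset[of _ "spt f"])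
    apply (auto simp: spt_def dest: galgD)
  done

lemma alg_conv:
  assumes f: "f \<in> grp_alg G" and k: "k \<in> grp_alg G"
  shows "conv G f k \<in> grp_alg G"
proof (rule galgI)
  show "finite (spt (conv G f k))"
  proof (rule finite_subset)
    show "finite ((\<lambda>(a, b). a \<otimes> b) ` (spt f \<times> spt k))" using galgD(1) f k by auto
    show "spt (conv G f k) \<subseteq> (\<lambda>(a, b). a \<otimes> b) ` (spt f \<times> spt k)"
    proof
      fix x assume "x \<in> spt (conv G f k)"
      then have x: "x \<in> carrier G" and s: "(\<Sum>y\<in>{y \<in> carrier G. f y \<noteq> 0}. f y * k (inv y \<otimes> x)) \<noteq> 0"
        by (auto simp: spt_def conv_def split: if_splits)
      from sum.not_neutral_contains_not_neutral[OF s] obtain y where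
        y: "y \<in> carrier G" "f y \<noteq> 0" "k (inv y \<otimes> x) \<noteq> 0" by auto
      have "x = y \<otimes> (inv y \<otimes> x)" using x y cancel1 by simp
      then show "x \<in> (\<lambda>(a, b). a \<otimes> b) ` (spt f \<times> spt k)"
        using y x by (intro image_eqI[of _ _ "(y, inv y \<otimes> x)"]) (auto simp: spt_def)
    qed
  qed
qed (simp add: conv_def)

lemma alg_gstar:
  assumes f: "f \<in> grp_alg G" shows "gstar G f \<in> grp_alg G"
proof (rule galgI)
  show "finite (spt (gstar G f))"
  proof (rule finite_subset)
    show "finite ((\<lambda>y. inv y) ` spt f)" using galgD(1)[OF f] by simp
    show "spt (gstar G f) \<subseteq> (\<lambda>y. inv y) ` spt f"
    proof
      fix x assume "x \<in> spt (gstar G f)"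
      then have "x \<in> carrier G" "f (inv x) \<noteq> 0" by (auto simp: spt_def gstar_def split: if_splits)
      then show "x \<in> (\<lambda>y. inv y) ` spt f" by (intro image_eqI[of _ _ "inv x"]) (auto simp: spt_def)
    qed
  qed
qed (simp add: gstar_def)

lemma conv_add1:
  assumes "f \<in> grp_alg G" "g \<in> grp_alg G"
  shows "conv G (f + g) k = conv G f k + conv G g k"
proof -
  let ?A = "spt f \<union> spt g"
  have fin: "finite ?A" using assms galgD by auto
  have "spt (f + g) \<subseteq> ?A" by (auto simp: spt_def)
  then show ?thesis
    using conv_eq[OF alg_add[OF assms] fin] conv_eq[OF assms(1) fin] conv_eq[OF assms(2) fin]
    by (auto simp: sum.distrib distrib_right)
qed

lemma conv_add2:
  assumes "f \<in> grp_alg G"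
  shows "conv G f (g + k) = conv G f g + conv G f k"
  using conv_eq[OF assms galgD(1)[OF assms] subset_refl]
  by (auto simp: sum.distrib distrib_left)

lemma conv_cmul1:
  assumes "f \<in> grp_alg G"
  shows "conv G ((\<lambda>_. c) * f) k = (\<lambda>_. c) * conv G f k"
proof -
  have "spt ((\<lambda>_. c) * f) \<subseteq> spt f" by (auto simp: spt_def)
  then show ?thesis
    using conv_eq[OF alg_cmul[OF assms] galgD(1)[OF assms]] conv_eq[OF assms galgD(1)[OF assms] subset_refl]
    by (auto simp: sum_distrib_left mult.assoc)
qed

lemma conv_cmul2:
  assumes "f \<in> grp_alg G"
  shows "conv G f ((\<lambda>_. c) * k) = (\<lambda>_. c) * conv G f k"
  using conv_eq[OF assms galgD(1)[OF assms] subset_refl]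
  by (auto simp: sum_distrib_left mult.left_commute)

lemma conv_neg1:
  assumes "f \<in> grp_alg G"
  shows "conv G (- f) k = - conv G f k"
proof -
  have "spt (- f) \<subseteq> spt f" by (auto simp: spt_def)
  then show ?thesis
    using conv_eq[OF alg_neg[OF assms] galgD(1)[OF assms]] conv_eq[OF assms galgD(1)[OF assms] subset_refl]
    by (auto simp: sum_negf)
qed

lemma conv_neg2:
  assumes "f \<in> grp_alg G"
  shows "conv G f (- k) = - conv G f k"
  using conv_eq[OF assms galgD(1)[OF assms] subset_refl]
  by (auto simp: sum_negf)

lemma spt_conv:
  assumes "f \<in> grp_alg G" "k \<in> grp_alg G"
  shows "spt (conv G f k) \<subseteq> (\<lambda>(a, b). a \<otimes> b) ` (spt f \<times> spt k)"
proof
  fix x assume "x \<in> spt (conv G f k)"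
  then have x: "x \<in> carrier G" and s: "(\<Sum>y\<in>{y \<in> carrier G. f y \<noteq> 0}. f y * k (inv y \<otimes> x)) \<noteq> 0"
    by (auto simp: spt_def conv_def split: if_splits)
  from sum.not_neutral_contains_not_neutral[OF s] obtain y where
    y: "y \<in> carrier G" "f y \<noteq> 0" "k (inv y \<otimes> x) \<noteq> 0" by auto
  have "x = y \<otimes> (inv y \<otimes> x)" using x y cancel1 by simp
  then show "x \<in> (\<lambda>(a, b). a \<otimes> b) ` (spt f \<times> spt k)"
    using y x by (intro image_eqI[of _ _ "(y, inv y \<otimes> x)"]) (auto simp: spt_def)
qed

lemma conv_assoc:
  assumes f: "f \<in> grp_alg G" and g: "g \<in> grp_alg G" and k: "k \<in> grp_alg G"
  shows "conv G (conv G f g) k = conv G f (conv G g k)"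
proof (rule ext)
  fix x
  define P where "P = (\<lambda>(a, b). a \<otimes> b) ` (spt f \<times> spt g)"
  have Pfin: "finite P" using galgD(1) f g by (auto simp: P_def)
  have Pc: "P \<subseteq> carrier G" using galgD(3)[OF f] galgD(3)[OF g] by (auto simp: P_def)
  have Fin: "finite (spt f)" using galgD(1)[OF f] .
  show "conv G (conv G f g) k x = conv G f (conv G g k) x"
  proof (cases "x \<in> carrier G")
    case False then show ?thesis by (simp add: conv_def)
  next
    case x: True
    have "conv G (conv G f g) k x = (\<Sum>y\<in>P. conv G f g y * k (inv y \<otimes> x))"
      using conv_eq[OF alg_conv[OF f g] Pfin spt_conv[OF f g, folded P_def]] x by simp
    also have "\<dots> = (\<Sum>y\<in>P. (\<Sum>u\<in>spt f. f u * g (inv u \<otimes> y)) * k (inv y \<otimes> x))"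
      using conv_eq[OF f Fin subset_refl] Pc by (intro sum.cong) auto
    also have "\<dots> = (\<Sum>u\<in>spt f. f u * (\<Sum>y\<in>P. g (inv u \<otimes> y) * k (inv y \<otimes> x)))"
      by (simp add: sum_distrib_right sum_distrib_left mult.assoc sum.swap[of _ P])
    also have "\<dots> = (\<Sum>u\<in>spt f. f u * conv G g k (inv u \<otimes> x))"
    proof (rule sum.cong[OF refl])
      fix u assume u: "u \<in> spt f"
      then have uc: "u \<in> carrier G" using galgD(3)[OF f] by auto
      define W where "W = (\<lambda>y. inv u \<otimes> y) ` P"
      have Wfin: "finite W" using Pfin by (simp add: W_def)
      have sW: "spt g \<subseteq> W"
      proof
        fix w assume w: "w \<in> spt g"
        then have wc: "w \<in> carrier G" using galgD(3)[OF g] by auto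
        have "u \<otimes> w \<in> P" using u w by (auto simp: P_def)
        moreover have "w = inv u \<otimes> (u \<otimes> w)" using cancel2 uc wc by simp
        ultimately show "w \<in> W" by (auto simp: W_def)
      qed
      have inj: "inj_on (\<lambda>y. inv u \<otimes> y) P"
        using Pc uc by (intro inj_onI) (metis cancel1 inv_closed m_closed subsetD)
      have "conv G g k (inv u \<otimes> x) = (\<Sum>w\<in>W. g w * k (inv w \<otimes> (inv u \<otimes> x)))"
        using conv_eq[OF g Wfin sW] uc x by simp
      also have "\<dots> = (\<Sum>y\<in>P. g (inv u \<otimes> y) * k (inv (inv u \<otimes> y) \<otimes> (inv u \<otimes> x)))"
        unfolding W_def by (subst sum.reindex[OF inj]) simp
      also have "\<dots> = (\<Sum>y\<in>P. g (inv u \<otimes> y) * k (inv y \<otimes> x))"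
      proof (rule sum.cong[OF refl])
        fix y assume "y \<in> P"
        then have yc: "y \<in> carrier G" using Pc by auto
        have "inv (inv u \<otimes> y) \<otimes> (inv u \<otimes> x) = inv y \<otimes> x"
          using yc uc x by (simp add: inv_mult_group m_assoc cancel1)
        then show "g (inv u \<otimes> y) * k (inv (inv u \<otimes> y) \<otimes> (inv u \<otimes> x)) = g (inv u \<otimes> y) * k (inv y \<otimes> x)"
          by simp
      qed
      finally show "f u * (\<Sum>y\<in>P. g (inv u \<otimes> y) * k (inv y \<otimes> x)) = f u * conv G g k (inv u \<otimes> x)"
        by simp
    qed
    also have "\<dots> = conv G f (conv G g k) x"
      using conv_eq[OF f Fin subset_refl] x by simp
    finally show ?thesis .
  qed
qed

lemma gstar_add: "gstar G (f + g) = gstar G f + gstar G g"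
  by (auto simp: gstar_def)
lemma gstar_cmul: "gstar G ((\<lambda>_. c) * f) = (\<lambda>_. c) * gstar G f"
  by (auto simp: gstar_def)
lemma gstar_gstar: "f \<in> grp_alg G \<Longrightarrow> gstar G (gstar G f) = f"
  by (auto simp: gstar_def galgD(2))

lemma gstar_conv:
  assumes f: "f \<in> grp_alg G" and g: "g \<in> grp_alg G"
  shows "gstar G (conv G f g) = conv G (gstar G g) (gstar G f)"
proof (rule ext)
  fix x
  show "gstar G (conv G f g) x = conv G (gstar G g) (gstar G f) x"
  proof (cases "x \<in> carrier G")
    case False then show ?thesis by (simp add: conv_def gstar_def)
  next
    case x: True
    define A where "A = spt f \<union> (\<lambda>w. inv x \<otimes> inv w) ` spt g"
    have Afin: "finite A" using galgD(1)[OF f] galgD(1)[OF g] by (simp add: A_def)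
    have Ac: "A \<subseteq> carrier G" using galgD(3)[OF f] galgD(3)[OF g] x by (auto simp: A_def)
    define B where "B = (\<lambda>y. x \<otimes> y) ` A"
    have Bfin: "finite B" using Afin by (simp add: B_def)
    have sB: "spt (gstar G g) \<subseteq> B"
    proof
      fix z assume "z \<in> spt (gstar G g)"
      then have z: "z \<in> carrier G" "g (inv z) \<noteq> 0" by (auto simp: spt_def gstar_def split: if_splits)
      have "inv x \<otimes> inv (inv z) \<in> A" unfolding A_def
        by (rule UnI2, rule image_eqI[of _ _ "inv z"]) (use z in \<open>auto simp: spt_def\<close>)
      moreover have "z = x \<otimes> (inv x \<otimes> inv (inv z))" using z x cancel1 by simp
      ultimately show "z \<in> B" by (auto simp: B_def)
    qed
    have inj: "inj_on (\<lambda>y. x \<otimes> y) A"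
      using Ac x by (intro inj_onI) (metis cancel2 subsetD)
    have "gstar G (conv G f g) x = (\<Sum>y\<in>A. f y * g (inv y \<otimes> inv x))"
      using conv_eq[OF f Afin] x by (simp add: gstar_def A_def)
    also have "\<dots> = (\<Sum>y\<in>A. gstar G g (x \<otimes> y) * gstar G f (inv (x \<otimes> y) \<otimes> x))"
    proof (rule sum.cong[OF refl])
      fix y assume "y \<in> A"
      then have yc: "y \<in> carrier G" using Ac by auto
      have e1: "inv (x \<otimes> y) \<otimes> x = inv y" using x yc
        by (simp add: inv_mult_group m_assoc l_inv)
      show "f y * g (inv y \<otimes> inv x) = gstar G g (x \<otimes> y) * gstar G f (inv (x \<otimes> y) \<otimes> x)"
        using x yc by (simp add: e1 gstar_def inv_mult_group cancel2)
    qed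
    also have "\<dots> = (\<Sum>z\<in>B. gstar G g z * gstar G f (inv z \<otimes> x))"
      unfolding B_def by (subst sum.reindex[OF inj]) simp
    also have "\<dots> = conv G (gstar G g) (gstar G f) x"
      using conv_eq[OF alg_gstar[OF g] Bfin sB] x by simp
    finally show ?thesis .
  qed
qed

lemma alg_diff: "f \<in> grp_alg G \<Longrightarrow> g \<in> grp_alg G \<Longrightarrow> f - g \<in> grp_alg G"
  using alg_add alg_neg by (metis diff_conv_add_uminus)

lemma ideal_alg: "x \<in> comm_ideal G \<Longrightarrow> x \<in> grp_alg G"
proof (induction rule: comm_ideal.induct)
  case (gen a b) then show ?case by (intro alg_diff alg_conv) (auto simp: sym_alg_def)
next
  case zero show ?case by (rule alg0)
next
  case (add x y) show ?case by (rule alg_add[OF add.IH])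
next
  case (lmult r x) then show ?case by (intro alg_conv)
next
  case (rmult r x) then show ?case by (intro alg_conv)
qed

lemma ideal_neg: "x \<in> comm_ideal G \<Longrightarrow> - x \<in> comm_ideal G"
proof (induction rule: comm_ideal.induct)
  case (gen a b)
  then have b: "b \<in> grp_alg G" by (simp add: sym_alg_def)
  have "- (conv G a b - conv G b a) = conv G (- a) b - conv G b (- a)"
    using gen b by (simp add: conv_neg1 conv_neg2)
  then show ?case using gen alg_neg comm_ideal.gen by metis
next
  case zero then show ?case by (metis comm_ideal.zero minus_zero)
next
  case (add x y) show ?case by (subst minus_add_distrib) (rule comm_ideal.add[OF add.IH])
next
  case (lmult r x) show ?case by (subst conv_neg2[OF lmult(1), symmetric]) (rule comm_ideal.lmult[OF lmult(1,3)])
next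
  case (rmult r x) show ?case by (subst conv_neg1[OF ideal_alg[OF rmult(2)], symmetric]) (rule comm_ideal.rmult[OF rmult(1,3)])
qed

lemma ideal_cmul: "x \<in> comm_ideal G \<Longrightarrow> (\<lambda>_. c) * x \<in> comm_ideal G"
proof (induction rule: comm_ideal.induct)
  case (gen a b)
  then have b: "b \<in> grp_alg G" by (simp add: sym_alg_def)
  have "(\<lambda>_. c) * (conv G a b - conv G b a) = conv G ((\<lambda>_. c) * a) b - conv G b ((\<lambda>_. c) * a)"
    using gen b by (simp add: conv_cmul1 conv_cmul2 right_diff_distrib)
  then show ?case using gen alg_cmul comm_ideal.gen by metis
next
  case zero then show ?case by (metis comm_ideal.zero mult_zero_right)
next
  case (add x y) show ?case by (subst distrib_left) (rule comm_ideal.add[OF add.IH])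
next
  case (lmult r x) show ?case by (subst conv_cmul2[OF lmult(1), symmetric]) (rule comm_ideal.lmult[OF lmult(1,3)])
next
  case (rmult r x) show ?case by (subst conv_cmul1[OF ideal_alg[OF rmult(2)], symmetric]) (rule comm_ideal.rmult[OF rmult(1,3)])
qed

end

lemma galg_inst:
  assumes G: "group G"
  shows "galg (grp_alg G) (conv G) (gstar G) (comm_ideal G) ((\<lambda>_. 1/2) :: 'g \<Rightarrow> 'k::field_char_0)"
proof unfold_locales
  show "(\<lambda>_. 1/2) + (\<lambda>_. 1/2) = (1 :: 'g \<Rightarrow> 'k)" by (rule ext) simp
qed (auto simp: group.alg0[OF G] group.alg_add[OF G] group.alg_neg[OF G] group.alg_conv[OF G]
      group.alg_gstar[OF G] group.alg_cmul[OF G] group.conv_add1[OF G] group.conv_add2[OF G]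
      group.conv_cmul1[OF G] group.conv_cmul2[OF G] group.conv_assoc[OF G] group.gstar_add[OF G]
      group.gstar_cmul[OF G] group.gstar_gstar[OF G] group.gstar_conv[OF G] group.ideal_alg[OF G]
      group.ideal_neg[OF G] group.ideal_cmul[OF G]
      intro: comm_ideal.zero comm_ideal.add comm_ideal.lmult comm_ideal.rmult comm_ideal.gen
      simp add: sym_alg_def)

lemma bridge_dot: assumes G: "group G" shows "gdot G = galg.dot (conv G) ((\<lambda>_. 1/2) :: 'g \<Rightarrow> 'k::field_char_0)"
  by (intro ext) (simp add: gdot_def galg.dot_def[OF galg_inst[OF G]] smul_def)
lemma bridge_br: assumes G: "group G" shows "gbr G = galg.br (conv G) ((\<lambda>_. 1/2) :: 'g \<Rightarrow> 'k::field_char_0)"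
  by (intro ext) (simp add: gbr_def galg.br_def[OF galg_inst[OF G]] smul_def)
lemma bridge_T: assumes G: "group G" shows "gtri G = galg.T (conv G) ((\<lambda>_. 1/2) :: 'g \<Rightarrow> 'k::field_char_0)"
  by (intro ext) (simp add: gtri_def galg.T_def[OF galg_inst[OF G]] bridge_dot[OF G] bridge_br[OF G])
lemma bridge_L: assumes G: "group G" shows "(Lam_rep G :: ('g \<Rightarrow> 'k::field_char_0) set) = galg.Lam (grp_alg G) (gstar G) (comm_ideal G)"
  by (simp add: Lam_rep_def galg.Lam_def[OF galg_inst[OF G]] AG_eq_def)
lemma bridge_S: assumes G: "group G" shows "(sharp_rep G :: ('g \<Rightarrow> 'k::field_char_0) set) = galg.Sh (grp_alg G) (gstar G) (comm_ideal G)"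
  by (simp add: sharp_rep_def galg.Sh_def[OF galg_inst[OF G]] AG_eq_def)

theorem mainTheorem7:
  fixes G :: "('g, 'm) monoid_scheme"
  assumes "group G"
  defines "L \<equiv> (Lam_rep G :: ('g \<Rightarrow> 'k::field_char_0) set)"
      and "S \<equiv> (sharp_rep G :: ('g \<Rightarrow> 'k) set)"
      and "eqA \<equiv> AG_eq G" and "dot \<equiv> gdot G" and "br \<equiv> gbr G" and "T \<equiv> gtri G"
      and "mulA \<equiv> conv G"
  shows
    \<comment> \<open>(i) well-typed, bilinear over kappa G^#, symmetric / skew-symmetric\<close>
    "((\<forall>x\<in>L. \<forall>y\<in>L. dot x y \<in> S \<and> br x y \<in> L)
     \<and> (\<forall>x\<in>L. \<forall>x'\<in>L. \<forall>y\<in>L.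
          eqA (dot (x + x') y) (dot x y + dot x' y) \<and> eqA (dot y (x + x')) (dot y x + dot y x')
        \<and> eqA (br (x + x') y) (br x y + br x' y) \<and> eqA (br y (x + x')) (br y x + br y x'))
     \<and> (\<forall>s\<in>S. \<forall>x\<in>L. \<forall>y\<in>L.
          eqA (dot (mulA s x) y) (mulA s (dot x y)) \<and> eqA (dot x (mulA s y)) (mulA s (dot x y))
        \<and> eqA (br (mulA s x) y) (mulA s (br x y)) \<and> eqA (br x (mulA s y)) (mulA s (br x y)))
     \<and> (\<forall>x\<in>L. \<forall>y\<in>L. eqA (dot x y) (dot y x) \<and> eqA (br x y) (- br y x)))
    \<comment> \<open>(ii) Jacobi identity\<close>
    \<and> (\<forall>x\<in>L. \<forall>y\<in>L. \<forall>z\<in>L. eqA (br (br x y) z + br (br y z) x + br (br z x) y) 0)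
    \<comment> \<open>(iii) (x,y,z) |-> [x,y].z is alternating trilinear\<close>
    \<and> ((\<forall>x\<in>L. \<forall>x'\<in>L. \<forall>y\<in>L. \<forall>z\<in>L.
          eqA (T (x + x') y z) (T x y z + T x' y z)
        \<and> eqA (T y (x + x') z) (T y x z + T y x' z)
        \<and> eqA (T y z (x + x')) (T y z x + T y z x'))
     \<and> (\<forall>s\<in>S. \<forall>x\<in>L. \<forall>y\<in>L. \<forall>z\<in>L.
          eqA (T (mulA s x) y z) (mulA s (T x y z))
        \<and> eqA (T x (mulA s y) z) (mulA s (T x y z))
        \<and> eqA (T x y (mulA s z)) (mulA s (T x y z)))
     \<and> (\<forall>x\<in>L. \<forall>y\<in>L. eqA (T x x y) 0 \<and> eqA (T x y x) 0 \<and> eqA (T y x x) 0))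
    \<comment> \<open>(iv)\<close>
    \<and> (\<forall>x\<in>L. \<forall>y\<in>L. \<forall>z\<in>L. eqA (br (br x y) z) (mulA (dot x z) y - mulA (dot y z) x))"
  unfolding L_def S_def eqA_def dot_def br_def T_def mulA_def
  unfolding bridge_dot[OF assms(1)] bridge_br[OF assms(1)] bridge_T[OF assms(1)] bridge_L[OF assms(1)] bridge_S[OF assms(1)] AG_eq_def
  by (rule galg.main[OF galg_inst[OF assms(1)]])

end
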